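(* Let $\alpha,\beta,\delta>0$, $\pi_g\in(0,1)$ and $\Delta_g=1/\pi_g-1$. Let $g:\mathbb{R}_+\to\mathbb{R}_+$ be differentiable and strictly increasing with $g(0)=1$ and $g'>0$. For a job $j$ with task intensities $a_j,p_j,r_j\ge 0$ and contact intensity $k_j\ge 0$, define \[ B_j(k_j)=1+(\alpha a_j+\beta p_j)\,g(k_j),\qquad P_j=1+\delta r_j,\qquad U_j=1/P_j,\qquad E_j^\ast=\frac{B_j}{B_j+P_j}. \] For $h\in\{M,g\}$ define \[ V_{hj}=(E_j^\ast)^2\tau^2_{hj}+(1-E_j^\ast)^2U_j, \] where $\tau^2_{Mj}=B_j$ and $\tau^2_{gj}=B_j/\pi_g$. Then: (i) If $a_j=p_j=0$ (a purely routine job), then $V_{Mj}$, $V_{gj}$ and the variance gap $V_{gj}-V_{Mj}$ do not depend on $k_j$. Hence the callback probabilities \[ c_{hj}=1-\Phi\!\left(\bar\theta\sqrt{1+V_{hj}}\right),\qquad \bar\theta>0, \] and the callback gap $c_{Mj}-c_{gj}$ also do not depend on $k_j$. (ii) If $a_j+p_j>0$, then $E_j^\ast$ and the variance gap \[ V_{gj}-V_{Mj}=\Delta_g\,\frac{B_j^3}{(B_j+P_j)^2} \] are strictly increasing in $k_j$. (iii) The cross-partials satisfy \[ \frac{\partial^2 B_j}{\partial k_j\,\partial a_j}=\alpha g'(k_j)>0,\qquad \frac{\partial^2 B_j}{\partial k_j\,\partial p_j}=\beta g'(k_j)>0. \]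
   Context: The setting is an information-based model of hiring. Productivity is $\theta\sim N(0,1)$ for both groups. For a group-$h$ applicant to job $j$ there are two signals: a subjective signal $s^s=\theta+\varepsilon^s$ with $\varepsilon^s\sim N(0,\tau^2_{hj})$, and an objective signal $s^o=\theta+\varepsilon^o$ with $\varepsilon^o\sim N(0,U_j)$. These are independent given $\theta$. The employer forms the composite $E_j^\ast s^s+(1-E_j^\ast)s^o$, and $V_{hj}$ is its noise variance. The callback probability is that of calling back when the posterior mean of $\theta$ given the composite exceeds $\bar\theta$. $\Phi$ is the standard normal cumulative distribution function. Group $M$ is the majority group and group $g$ is a minority group. *)

theory Defs
  imports "HOL-Probability.Probability"
begin

definition Phi :: "real \<Rightarrow> real" where
  "Phi x = measure (density lborel std_normal_density) {..x}"

definition Bj :: "real \<Rightarrow> real \<Rightarrow> (real \<Rightarrow> real) \<Rightarrow> real \<Rightarrow> real \<Rightarrow> real \<Rightarrow> real" where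
  "Bj alpha beta g a p k = 1 + (alpha * a + beta * p) * g k"

definition Pj :: "real \<Rightarrow> real \<Rightarrow> real" where
  "Pj delta r = 1 + delta * r"

definition Uj :: "real \<Rightarrow> real \<Rightarrow> real" where
  "Uj delta r = 1 / Pj delta r"

definition Estar :: "real \<Rightarrow> real \<Rightarrow> real \<Rightarrow> (real \<Rightarrow> real) \<Rightarrow> real \<Rightarrow> real \<Rightarrow> real \<Rightarrow> real \<Rightarrow> real" where
  "Estar alpha beta delta g a p r k =
     Bj alpha beta g a p k / (Bj alpha beta g a p k + Pj delta r)"

definition Vj :: "real \<Rightarrow> real \<Rightarrow> real \<Rightarrow> (real \<Rightarrow> real) \<Rightarrow> real \<Rightarrow> real \<Rightarrow> real \<Rightarrow> real \<Rightarrow> real \<Rightarrow> real" where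
  "Vj alpha beta delta g tau2 a p r k =
     (Estar alpha beta delta g a p r k)\<^sup>2 * tau2
     + (1 - Estar alpha beta delta g a p r k)\<^sup>2 * Uj delta r"

definition VM :: "real \<Rightarrow> real \<Rightarrow> real \<Rightarrow> (real \<Rightarrow> real) \<Rightarrow> real \<Rightarrow> real \<Rightarrow> real \<Rightarrow> real \<Rightarrow> real" where
  "VM alpha beta delta g a p r k =
     Vj alpha beta delta g (Bj alpha beta g a p k) a p r k"

definition Vg :: "real \<Rightarrow> real \<Rightarrow> real \<Rightarrow> real \<Rightarrow> (real \<Rightarrow> real) \<Rightarrow> real \<Rightarrow> real \<Rightarrow> real \<Rightarrow> real \<Rightarrow> real" where
  "Vg alpha beta delta pig g a p r k =
     Vj alpha beta delta g (Bj alpha beta g a p k / pig) a p r k"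

definition callback :: "real \<Rightarrow> real \<Rightarrow> real" where
  "callback thetabar V = 1 - Phi (thetabar * sqrt (1 + V))"

end

theory Submission
  imports Defs
begin

lemma frac_mono:
  fixes x y P :: real
  assumes "0 < x" "x < y" "P > 0"
  shows "x / (x + P) < y / (y + P)"
proof -
  have "x * (y + P) < y * (x + P)" using assms by (simp add: algebra_simps)
  then show ?thesis using assms by (simp add: divide_simps)
qed
lemma cube_mono:
  fixes x y P :: real
  assumes "0 < x" "x < y" "P > 0"
  shows "x ^ 3 / (x + P)\<^sup>2 < y ^ 3 / (y + P)\<^sup>2"
proof -
  have q: "x / (x + P) < y / (y + P)" by (rule frac_mono[OF assms])
  have q0: "0 < x / (x + P)" using assms by simp
  have sq: "(x / (x + P))\<^sup>2 < (y / (y + P))\<^sup>2"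
    using q q0 by (intro power_strict_mono) auto
  have "(x / (x + P))\<^sup>2 * x < (y / (y + P))\<^sup>2 * y"
    using sq assms q0 by (intro mult_strict_mono) auto
  moreover have "x ^ 3 / (x + P)\<^sup>2 = (x / (x + P))\<^sup>2 * x"
    by (simp add: power2_eq_square power3_eq_cube)
  moreover have "y ^ 3 / (y + P)\<^sup>2 = (y / (y + P))\<^sup>2 * y"
    by (simp add: power2_eq_square power3_eq_cube)
  ultimately show ?thesis by simp
qed

theorem proposition2:
  fixes alpha beta delta pig :: real
    and g g' :: "real \<Rightarrow> real"
  assumes alpha: "alpha > 0" and beta: "beta > 0" and delta: "delta > 0"
    and pig: "0 < pig" "pig < 1"
    and g_nonneg: "\<forall>k\<ge>0. g k \<ge> 0"
    and g_deriv: "\<forall>k\<ge>0. (g has_real_derivative g' k) (at k within {0..})"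
    and g_mono: "strict_mono_on {0..} g"
    and g0: "g 0 = 1"
    and g'_pos: "\<forall>k\<ge>0. g' k > 0"
  shows
    "(\<forall>r thetabar k1 k2. r \<ge> 0 \<and> thetabar > 0 \<and> k1 \<ge> 0 \<and> k2 \<ge> 0 \<longrightarrow>
        VM alpha beta delta g 0 0 r k1 = VM alpha beta delta g 0 0 r k2
      \<and> Vg alpha beta delta pig g 0 0 r k1 = Vg alpha beta delta pig g 0 0 r k2
      \<and> Vg alpha beta delta pig g 0 0 r k1 - VM alpha beta delta g 0 0 r k1
        = Vg alpha beta delta pig g 0 0 r k2 - VM alpha beta delta g 0 0 r k2
      \<and> callback thetabar (VM alpha beta delta g 0 0 r k1)
        = callback thetabar (VM alpha beta delta g 0 0 r k2)
      \<and> callback thetabar (Vg alpha beta delta pig g 0 0 r k1)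
        = callback thetabar (Vg alpha beta delta pig g 0 0 r k2)
      \<and> callback thetabar (VM alpha beta delta g 0 0 r k1)
          - callback thetabar (Vg alpha beta delta pig g 0 0 r k1)
        = callback thetabar (VM alpha beta delta g 0 0 r k2)
          - callback thetabar (Vg alpha beta delta pig g 0 0 r k2))
    \<and>
    (\<forall>a p r. a \<ge> 0 \<and> p \<ge> 0 \<and> r \<ge> 0 \<and> a + p > 0 \<longrightarrow>
        (\<forall>k\<ge>0. Vg alpha beta delta pig g a p r k - VM alpha beta delta g a p r k
           = (1 / pig - 1) * (Bj alpha beta g a p k) ^ 3
               / (Bj alpha beta g a p k + Pj delta r)\<^sup>2)
      \<and> strict_mono_on {0..} (\<lambda>k. Estar alpha beta delta g a p r k)
      \<and> strict_mono_on {0..}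
          (\<lambda>k. Vg alpha beta delta pig g a p r k - VM alpha beta delta g a p r k))
    \<and>
    (\<forall>a p k. a \<ge> 0 \<and> p \<ge> 0 \<and> k \<ge> 0 \<longrightarrow>
        (\<forall>a' p'. ((\<lambda>k'. Bj alpha beta g a' p' k') has_real_derivative
                    (alpha * a' + beta * p') * g' k) (at k within {0..}))
      \<and> ((\<lambda>a'. (alpha * a' + beta * p) * g' k) has_real_derivative alpha * g' k) (at a)
      \<and> ((\<lambda>p'. (alpha * a + beta * p') * g' k) has_real_derivative beta * g' k) (at p)
      \<and> alpha * g' k > 0 \<and> beta * g' k > 0)"
apply (rule conjI[OF _ conjI])
  subgoal by (simp add: VM_def Vg_def Vj_def Estar_def Bj_def)
  subgoal proof (intro allI impI, intro conjI)
  fix a p r :: real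
  assume H: "0 \<le> a \<and> 0 \<le> p \<and> 0 \<le> r \<and> 0 < a + p"
  define c where "c = alpha * a + beta * p"
  have c: "c > 0" using H alpha beta unfolding c_def
    by (smt (verit) mult_pos_pos mult_nonneg_nonneg)
  have P: "Pj delta r > 0" using H delta unfolding Pj_def by (simp add: add_pos_nonneg)
  have Bpos: "Bj alpha beta g a p k > 0" if "k \<ge> 0" for k
    using g_nonneg that c unfolding Bj_def c_def[symmetric]
    by (smt (verit) mult_nonneg_nonneg)
  have Bmono: "Bj alpha beta g a p x < Bj alpha beta g a p y" if "0 \<le> x" "x < y" for x y
  proof -
    have "g x < g y" using g_mono that unfolding strict_mono_on_def by auto
    then show ?thesis using c unfolding Bj_def c_def[symmetric] by simp
  qed
  have gap: "Vg alpha beta delta pig g a p r k - VM alpha beta delta g a p r k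
           = (1 / pig - 1) * (Bj alpha beta g a p k) ^ 3
               / (Bj alpha beta g a p k + Pj delta r)\<^sup>2" if "k \<ge> 0" for k
  proof -
    have "Vg alpha beta delta pig g a p r k - VM alpha beta delta g a p r k
        = (Estar alpha beta delta g a p r k)\<^sup>2 * (Bj alpha beta g a p k / pig - Bj alpha beta g a p k)"
      unfolding Vg_def VM_def Vj_def by (simp add: algebra_simps)
    also have "\<dots> = (1 / pig - 1) * (Bj alpha beta g a p k) ^ 3
               / (Bj alpha beta g a p k + Pj delta r)\<^sup>2"
      unfolding Estar_def by (simp add: power2_eq_square power3_eq_cube field_simps)
    finally show ?thesis .
  qed
  show "\<forall>k\<ge>0. Vg alpha beta delta pig g a p r k - VM alpha beta delta g a p r k
           = (1 / pig - 1) * (Bj alpha beta g a p k) ^ 3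
               / (Bj alpha beta g a p k + Pj delta r)\<^sup>2" using gap by blast
  show "strict_mono_on {0..} (\<lambda>k. Estar alpha beta delta g a p r k)"
    unfolding strict_mono_on_def Estar_def
    using frac_mono Bpos Bmono P by auto
  show "strict_mono_on {0..}
          (\<lambda>k. Vg alpha beta delta pig g a p r k - VM alpha beta delta g a p r k)"
  proof (rule strict_mono_onI)
    fix x y :: real assume xy: "x \<in> {0..}" "y \<in> {0..}" "x < y"
    have d: "1 / pig - 1 > 0" using pig by simp
    have "(Bj alpha beta g a p x) ^ 3 / (Bj alpha beta g a p x + Pj delta r)\<^sup>2
        < (Bj alpha beta g a p y) ^ 3 / (Bj alpha beta g a p y + Pj delta r)\<^sup>2"
      using cube_mono Bpos Bmono P xy by auto
    then have "(1 / pig - 1) * ((Bj alpha beta g a p x) ^ 3 / (Bj alpha beta g a p x + Pj delta r)\<^sup>2)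
        < (1 / pig - 1) * ((Bj alpha beta g a p y) ^ 3 / (Bj alpha beta g a p y + Pj delta r)\<^sup>2)"
      using d by (rule mult_strict_left_mono)
    then show "Vg alpha beta delta pig g a p r x - VM alpha beta delta g a p r x
        < Vg alpha beta delta pig g a p r y - VM alpha beta delta g a p r y"
      using gap[of x] gap[of y] xy by (simp only: times_divide_eq_right atLeast_iff)
  qed
qed
  subgoal proof (intro allI impI, intro conjI)
  fix a p k :: real
  assume H: "0 \<le> a \<and> 0 \<le> p \<and> 0 \<le> k"
  have gk: "g' k > 0" using g'_pos H by auto
  show "\<forall>a' p'. ((\<lambda>k'. Bj alpha beta g a' p' k') has_real_derivative
                    (alpha * a' + beta * p') * g' k) (at k within {0..})"
  proof (intro allI)
    fix a' p'
    show "((\<lambda>k'. Bj alpha beta g a' p' k') has_real_derivative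
                    (alpha * a' + beta * p') * g' k) (at k within {0..})"
      unfolding Bj_def using g_deriv H
      by (auto intro!: derivative_eq_intros)
  qed
  show "((\<lambda>a'. (alpha * a' + beta * p) * g' k) has_real_derivative alpha * g' k) (at a)"
    by (auto intro!: derivative_eq_intros)
  show "((\<lambda>p'. (alpha * a + beta * p') * g' k) has_real_derivative beta * g' k) (at p)"
    by (auto intro!: derivative_eq_intros)
  show "alpha * g' k > 0" using alpha gk by simp
  show "beta * g' k > 0" using beta gk by simp
qed
  done


end
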